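(* Let $N$ be a nested set of separations of a connected locally finite graph $G$, let $((A_i,B_i))_{i\in\mathbb N}$ be a strictly increasing sequence of orientations of separations in $N$ whose underlying separations are tight, and let $(A,B)=(\bigcup_iA_i,\bigcap_iB_i)$. If the sequence is non-exhaustive (i.e. $B\ne\emptyset$) and $N$ distinguishes all pre-tangles in $G$ induced by ends of $G$ lying in the closure of $A\cap B$, then exactly one end of $G$ lies in the closure of $A\cap B$.
   Context: A separation of $G$ is an unordered pair $\{A,B\}$ of subsets of $V(G)$ with $A\cup B=V(G)$ and no edge between $A\setminus B$ and $B\setminus A$; order $|A\cap B|$. Oriented separations are ordered by $(A,B)\le(C,D)$ iff $A\subseteq C$ and $B\supseteq D$; nested means some orientations are comparable. For $X\subseteq V(G)$, a component $K$ of $G-X$ is tight if $N_G(K)=X$; a separation $\{A,B\}$ is tight if both $A\setminus B$ and $B\setminus A$ contain the vertex set of a tight component of $G-(A\cap B)$. A pre-tangle is a consistent set $P$ of oriented separations (no $(A,B),(C,D)\in P$ with $\{A,B\}\ne\{C,D\}$ and $(B,A)\le(C,D)$) containing, for some $k\in\mathbb N\cup\{\aleph_0\}$, exactly one orientation of every separation of order $<k$ and nothing else. A separation distinguishes two pre-tangles if both orient it, differently; $N$ distinguishes a set of pre-tangles if any two of them distinguished by some separation are distinguished by an element of $N$. An end is an equivalence class of rays; the pre-tangle $P_\omega$ induced by an end $\omega$ contains, for every finite-order separation $\{A,B\}$, the orientation $(A,B)$ such that rays of $\omega$ have cofinitely many vertices in $B\setminus A$. A comb is a ray (spine) together with infinitely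 many disjoint finite paths meeting it exactly in their first vertex; their last vertices are the teeth. An end $\omega$ lies in the closure of $U\subseteq V(G)$ if there is a comb with teeth in $U$ whose spine is in $\omega$. *)

theory Defs
  imports Main "HOL-Library.Uprod" "HOL-Library.Extended_Nat"
begin

definition graph :: "'a set \<Rightarrow> ('a \<Rightarrow> 'a \<Rightarrow> bool) \<Rightarrow> bool" where
  "graph V E \<longleftrightarrow> (\<forall>x y. E x y \<longrightarrow> x \<in> V \<and> y \<in> V \<and> x \<noteq> y \<and> E y x)"

definition locally_finite :: "'a set \<Rightarrow> ('a \<Rightarrow> 'a \<Rightarrow> bool) \<Rightarrow> bool" where
  "locally_finite V E \<longleftrightarrow> (\<forall>v\<in>V. finite {u. E v u})"

definition conn_in :: "('a \<Rightarrow> 'a \<Rightarrow> bool) \<Rightarrow> 'a set \<Rightarrow> 'a \<Rightarrow> 'a \<Rightarrow> bool" where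
  "conn_in E S x y \<longleftrightarrow> x \<in> S \<and> (\<lambda>u v. E u v \<and> u \<in> S \<and> v \<in> S)\<^sup>*\<^sup>* x y"

definition connected_graph :: "'a set \<Rightarrow> ('a \<Rightarrow> 'a \<Rightarrow> bool) \<Rightarrow> bool" where
  "connected_graph V E \<longleftrightarrow> V \<noteq> {} \<and> (\<forall>x\<in>V. \<forall>y\<in>V. conn_in E V x y)"

definition is_sep :: "'a set \<Rightarrow> ('a \<Rightarrow> 'a \<Rightarrow> bool) \<Rightarrow> 'a set \<Rightarrow> 'a set \<Rightarrow> bool" where
  "is_sep V E A B \<longleftrightarrow> A \<union> B = V \<and> (\<forall>x\<in>A - B. \<forall>y\<in>B - A. \<not> E x y)"

definition separation :: "'a set \<Rightarrow> ('a \<Rightarrow> 'a \<Rightarrow> bool) \<Rightarrow> 'a set uprod \<Rightarrow> bool" where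
  "separation V E s \<longleftrightarrow> (\<exists>A B. s = Upair A B \<and> is_sep V E A B)"

definition sep_order :: "'a set \<Rightarrow> 'a set \<Rightarrow> enat" where
  "sep_order A B = (if finite (A \<inter> B) then enat (card (A \<inter> B)) else \<infinity>)"

definition orientations :: "'a set uprod \<Rightarrow> ('a set \<times> 'a set) set" where
  "orientations s = {(A, B). s = Upair A B}"

definition sep_le :: "'a set \<times> 'a set \<Rightarrow> 'a set \<times> 'a set \<Rightarrow> bool" where
  "sep_le p q \<longleftrightarrow> fst p \<subseteq> fst q \<and> snd q \<subseteq> snd p"

definition nested :: "'a set uprod \<Rightarrow> 'a set uprod \<Rightarrow> bool" where
  "nested s t \<longleftrightarrow> (\<exists>p\<in>orientations s. \<exists>q\<in>orientations t. sep_le p q)"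

definition nested_set :: "'a set uprod set \<Rightarrow> bool" where
  "nested_set N \<longleftrightarrow> (\<forall>s\<in>N. \<forall>t\<in>N. nested s t)"

definition component :: "'a set \<Rightarrow> ('a \<Rightarrow> 'a \<Rightarrow> bool) \<Rightarrow> 'a set \<Rightarrow> 'a set \<Rightarrow> bool" where
  "component V E X K \<longleftrightarrow> (\<exists>x\<in>V - X. K = {y. conn_in E (V - X) x y})"

definition nbhd :: "'a set \<Rightarrow> ('a \<Rightarrow> 'a \<Rightarrow> bool) \<Rightarrow> 'a set \<Rightarrow> 'a set" where
  "nbhd V E K = {v \<in> V - K. \<exists>u\<in>K. E u v}"

definition tight_component :: "'a set \<Rightarrow> ('a \<Rightarrow> 'a \<Rightarrow> bool) \<Rightarrow> 'a set \<Rightarrow> 'a set \<Rightarrow> bool" where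
  "tight_component V E X K \<longleftrightarrow> component V E X K \<and> nbhd V E K = X"

definition tight_sep :: "'a set \<Rightarrow> ('a \<Rightarrow> 'a \<Rightarrow> bool) \<Rightarrow> 'a set uprod \<Rightarrow> bool" where
  "tight_sep V E s \<longleftrightarrow> (\<exists>A B. s = Upair A B \<and> is_sep V E A B \<and>
      (\<exists>K. tight_component V E (A \<inter> B) K \<and> K \<subseteq> A - B) \<and>
      (\<exists>K. tight_component V E (A \<inter> B) K \<and> K \<subseteq> B - A))"

definition consistent :: "('a set \<times> 'a set) set \<Rightarrow> bool" where
  "consistent P \<longleftrightarrow> \<not> (\<exists>A B C D. (A, B) \<in> P \<and> (C, D) \<in> P \<and> Upair A B \<noteq> Upair C D
        \<and> sep_le (B, A) (C, D))"

definition pre_tangle :: "'a set \<Rightarrow> ('a \<Rightarrow> 'a \<Rightarrow> bool) \<Rightarrow> ('a set \<times> 'a set) set \<Rightarrow> bool" where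
  "pre_tangle V E P \<longleftrightarrow> consistent P \<and> (\<exists>k::enat.
      (\<forall>A B. is_sep V E A B \<and> sep_order A B < k \<longrightarrow> card (P \<inter> {(A, B), (B, A)}) = 1) \<and>
      (\<forall>(A, B)\<in>P. is_sep V E A B \<and> sep_order A B < k))"

definition distinguishes :: "'a set uprod \<Rightarrow> ('a set \<times> 'a set) set \<Rightarrow> ('a set \<times> 'a set) set \<Rightarrow> bool" where
  "distinguishes s P1 P2 \<longleftrightarrow> P1 \<inter> orientations s \<noteq> {} \<and> P2 \<inter> orientations s \<noteq> {}
      \<and> P1 \<inter> orientations s \<noteq> P2 \<inter> orientations s"

definition distinguishes_set :: "'a set \<Rightarrow> ('a \<Rightarrow> 'a \<Rightarrow> bool) \<Rightarrow> 'a set uprod set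
      \<Rightarrow> ('a set \<times> 'a set) set set \<Rightarrow> bool" where
  "distinguishes_set V E N T \<longleftrightarrow> (\<forall>P1\<in>T. \<forall>P2\<in>T.
      (\<exists>s. separation V E s \<and> distinguishes s P1 P2) \<longrightarrow> (\<exists>s\<in>N. distinguishes s P1 P2))"

definition is_ray :: "'a set \<Rightarrow> ('a \<Rightarrow> 'a \<Rightarrow> bool) \<Rightarrow> (nat \<Rightarrow> 'a) \<Rightarrow> bool" where
  "is_ray V E r \<longleftrightarrow> inj r \<and> (\<forall>n. r n \<in> V \<and> E (r n) (r (Suc n)))"

(* two rays are equivalent if no finite vertex set separates them, i.e. for every finite S
   they have tails in the same component of G - S *)
definition ray_equiv :: "'a set \<Rightarrow> ('a \<Rightarrow> 'a \<Rightarrow> bool) \<Rightarrow> (nat \<Rightarrow> 'a) \<Rightarrow> (nat \<Rightarrow> 'a) \<Rightarrow> bool" where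
  "ray_equiv V E r1 r2 \<longleftrightarrow> (\<forall>S. finite S \<longrightarrow> (\<exists>m n. (\<forall>i\<ge>m. r1 i \<notin> S) \<and> (\<forall>j\<ge>n. r2 j \<notin> S)
       \<and> conn_in E (V - S) (r1 m) (r2 n)))"

definition is_end :: "'a set \<Rightarrow> ('a \<Rightarrow> 'a \<Rightarrow> bool) \<Rightarrow> (nat \<Rightarrow> 'a) set \<Rightarrow> bool" where
  "is_end V E \<omega> \<longleftrightarrow> (\<exists>r. is_ray V E r \<and> \<omega> = {r'. is_ray V E r' \<and> ray_equiv V E r r'})"

definition end_pre_tangle :: "'a set \<Rightarrow> ('a \<Rightarrow> 'a \<Rightarrow> bool) \<Rightarrow> (nat \<Rightarrow> 'a) set
      \<Rightarrow> ('a set \<times> 'a set) set" where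
  "end_pre_tangle V E \<omega> = {(A, B). is_sep V E A B \<and> finite (A \<inter> B) \<and>
      (\<forall>r\<in>\<omega>. finite {n. r n \<notin> B - A})}"

definition is_path :: "'a set \<Rightarrow> ('a \<Rightarrow> 'a \<Rightarrow> bool) \<Rightarrow> 'a list \<Rightarrow> bool" where
  "is_path V E p \<longleftrightarrow> p \<noteq> [] \<and> distinct p \<and> set p \<subseteq> V \<and> successively E p"

(* a comb with spine r, paths P i (starting on the spine) and teeth last (P i) in U *)
definition is_comb :: "'a set \<Rightarrow> ('a \<Rightarrow> 'a \<Rightarrow> bool) \<Rightarrow> (nat \<Rightarrow> 'a) \<Rightarrow> (nat \<Rightarrow> 'a list) \<Rightarrow> bool" where
  "is_comb V E r P \<longleftrightarrow> is_ray V E r \<and>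
     (\<forall>i. is_path V E (P i) \<and> set (P i) \<inter> range r = {hd (P i)}) \<and>
     (\<forall>i j. i \<noteq> j \<longrightarrow> set (P i) \<inter> set (P j) = {})"

definition end_in_closure :: "'a set \<Rightarrow> ('a \<Rightarrow> 'a \<Rightarrow> bool) \<Rightarrow> (nat \<Rightarrow> 'a) set \<Rightarrow> 'a set \<Rightarrow> bool" where
  "end_in_closure V E \<omega> U \<longleftrightarrow> (\<exists>r P. is_comb V E r P \<and> r \<in> \<omega> \<and> (\<forall>i. last (P i) \<in> U))"

end

theory Submission
  imports Defs
begin


lemma graph_sym: "graph V E \<Longrightarrow> E x y \<Longrightarrow> E y x"
  unfolding graph_def by blast
lemma graph_V: "graph V E \<Longrightarrow> E x y \<Longrightarrow> x \<in> V \<and> y \<in> V"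
  unfolding graph_def by blast

lemma conn_mem: "conn_in E S x y \<Longrightarrow> x \<in> S \<and> y \<in> S"
proof -
  assume a: "conn_in E S x y"
  have "(\<lambda>u v. E u v \<and> u \<in> S \<and> v \<in> S)\<^sup>*\<^sup>* x y" "x \<in> S" using a unfolding conn_in_def by auto
  then show ?thesis by (induction rule: rtranclp_induct) auto
qed

lemma conn_refl: "x \<in> S \<Longrightarrow> conn_in E S x x"
  unfolding conn_in_def by auto

lemma conn_edge: "E x y \<Longrightarrow> x \<in> S \<Longrightarrow> y \<in> S \<Longrightarrow> conn_in E S x y"
  unfolding conn_in_def by (auto intro: r_into_rtranclp)

lemma conn_trans: "conn_in E S x y \<Longrightarrow> conn_in E S y z \<Longrightarrow> conn_in E S x z"
  unfolding conn_in_def by (auto intro: rtranclp_trans)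

lemma conn_sym: assumes "graph V E" "conn_in E S x y" shows "conn_in E S y x"
proof -
  have r: "(\<lambda>u v. E u v \<and> u \<in> S \<and> v \<in> S)\<^sup>*\<^sup>* x y" using assms(2) unfolding conn_in_def by auto
  have "(\<lambda>u v. E u v \<and> u \<in> S \<and> v \<in> S)\<^sup>*\<^sup>* y x" using r
  proof (induction rule: rtranclp_induct)
    case base then show ?case by simp
  next
    case (step b c)
    then have "(\<lambda>u v. E u v \<and> u \<in> S \<and> v \<in> S) c b" using graph_sym[OF assms(1)] by blast
    then show ?case using step(3) by (rule converse_rtranclp_into_rtranclp)
  qed
  then show ?thesis using conn_mem[OF assms(2)] unfolding conn_in_def by auto
qed

lemma conn_mono: "conn_in E S x y \<Longrightarrow> S \<subseteq> T \<Longrightarrow> conn_in E T x y"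
proof -
  assume a: "conn_in E S x y" and st: "S \<subseteq> T"
  have "(\<lambda>u v. E u v \<and> u \<in> S \<and> v \<in> S)\<^sup>*\<^sup>* x y" "x \<in> S" using a unfolding conn_in_def by auto
  then have "(\<lambda>u v. E u v \<and> u \<in> T \<and> v \<in> T)\<^sup>*\<^sup>* x y"
    by (induction rule: rtranclp_induct) (use st in \<open>auto intro: rtranclp.rtrancl_into_rtrancl\<close>)
  then show ?thesis using a st unfolding conn_in_def by auto
qed

lemma is_sep_sym: "graph V E \<Longrightarrow> is_sep V E A B \<Longrightarrow> is_sep V E B A"
  unfolding is_sep_def graph_def by blast

lemma conn_stay:
  assumes g: "graph V E" and s: "is_sep V E A B" and c: "conn_in E (V - (A \<inter> B)) x y" and x: "x \<in> A - B"
  shows "y \<in> A - B"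
proof -
  have "(\<lambda>u v. E u v \<and> u \<in> V - (A \<inter> B) \<and> v \<in> V - (A \<inter> B))\<^sup>*\<^sup>* x y" using c unfolding conn_in_def by auto
  then show ?thesis
  proof (induction rule: rtranclp_induct)
    case base then show ?case using x by simp
  next
    case (step b c)
    then show ?case using s unfolding is_sep_def by blast
  qed
qed

lemma ray_tail_conn:
  assumes "is_ray V E r" "\<forall>i\<ge>n. r i \<notin> S" "k \<ge> n"
  shows "conn_in E (V - S) (r n) (r k)"
  using assms(3)
proof (induction k)
  case 0 then show ?case using assms by (auto intro: conn_refl simp: is_ray_def)
next
  case (Suc k)
  show ?case
  proof (cases "Suc k = n")
    case True then show ?thesis using assms by (auto intro: conn_refl simp: is_ray_def)
  next
    case False
    then have "k \<ge> n" using Suc by simp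
    then have "conn_in E (V - S) (r n) (r k)" using Suc by simp
    moreover have "conn_in E (V - S) (r k) (r (Suc k))"
      using assms \<open>k \<ge> n\<close> by (intro conn_edge) (auto simp: is_ray_def)
    ultimately show ?thesis by (rule conn_trans)
  qed
qed

lemma ray_tail_conn2:
  assumes g: "graph V E" and "is_ray V E r" "\<forall>i\<ge>n. r i \<notin> S" "\<forall>i\<ge>m. r i \<notin> S"
  shows "conn_in E (V - S) (r n) (r m)"
proof (cases "n \<le> m")
  case True then show ?thesis using ray_tail_conn assms by blast
next
  case False then show ?thesis using ray_tail_conn[OF assms(2) assms(4), of n] conn_sym[OF g] by auto
qed

lemma ray_tail_avoid:
  assumes "is_ray V E r" "finite S"
  shows "\<exists>m. \<forall>i\<ge>m. r i \<notin> S"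
proof -
  have "finite (r -` S)" using assms by (auto simp: is_ray_def intro: finite_vimageI)
  then obtain m where "\<forall>i\<in>r -` S. i < m" by (meson finite_nat_set_iff_bounded)
  then show ?thesis by (meson leD vimageI)
qed

lemma ray_equiv_refl:
  assumes "is_ray V E r" shows "ray_equiv V E r r"
  unfolding ray_equiv_def
proof (intro allI impI)
  fix S :: "'a set" assume "finite S"
  then obtain m where m: "\<forall>i\<ge>m. r i \<notin> S" using ray_tail_avoid assms by blast
  then have "conn_in E (V - S) (r m) (r m)" using assms by (auto intro: conn_refl simp: is_ray_def)
  then show "\<exists>m n. (\<forall>i\<ge>m. r i \<notin> S) \<and> (\<forall>j\<ge>n. r j \<notin> S) \<and> conn_in E (V - S) (r m) (r n)"
    using m by blast
qed

lemma ray_equiv_sym: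
  assumes g: "graph V E" and "ray_equiv V E r1 r2" shows "ray_equiv V E r2 r1"
  unfolding ray_equiv_def
proof (intro allI impI)
  fix S :: "'a set" assume "finite S"
  then obtain m n where "(\<forall>i\<ge>m. r1 i \<notin> S)" "(\<forall>j\<ge>n. r2 j \<notin> S)" "conn_in E (V - S) (r1 m) (r2 n)"
    using assms(2) unfolding ray_equiv_def by blast
  then show "\<exists>m n. (\<forall>i\<ge>m. r2 i \<notin> S) \<and> (\<forall>j\<ge>n. r1 j \<notin> S) \<and> conn_in E (V - S) (r2 m) (r1 n)"
    using conn_sym[OF g] by blast
qed

lemma ray_equiv_trans:
  assumes g: "graph V E" and r2: "is_ray V E r2" and "ray_equiv V E r1 r2" "ray_equiv V E r2 r3"
  shows "ray_equiv V E r1 r3"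
  unfolding ray_equiv_def
proof (intro allI impI)
  fix S :: "'a set" assume "finite S"
  then obtain m n where a: "(\<forall>i\<ge>m. r1 i \<notin> S)" "(\<forall>j\<ge>n. r2 j \<notin> S)" "conn_in E (V - S) (r1 m) (r2 n)"
    using assms(3) unfolding ray_equiv_def by blast
  obtain n' p where b: "(\<forall>i\<ge>n'. r2 i \<notin> S)" "(\<forall>j\<ge>p. r3 j \<notin> S)" "conn_in E (V - S) (r2 n') (r3 p)"
    using assms(4) \<open>finite S\<close> unfolding ray_equiv_def by blast
  have "conn_in E (V - S) (r2 n) (r2 n')" using ray_tail_conn2[OF g r2 a(2) b(1)] .
  then have "conn_in E (V - S) (r1 m) (r3 p)" using a(3) b(3) by (meson conn_trans)
  then show "\<exists>m n. (\<forall>i\<ge>m. r1 i \<notin> S) \<and> (\<forall>j\<ge>n. r3 j \<notin> S) \<and> conn_in E (V - S) (r1 m) (r3 n)"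
    using a(1) b(2) by blast
qed




locale bfs =
  fixes V :: "'a set" and E :: "'a \<Rightarrow> 'a \<Rightarrow> bool" and v0 :: 'a
  assumes g: "graph V E" and lf: "locally_finite V E" and cg: "connected_graph V E" and v0: "v0 \<in> V"
begin

definition dist :: "'a \<Rightarrow> nat" where "dist v = (LEAST n. (E ^^ n) v0 v)"

lemma restr_eq: "(\<lambda>u v. E u v \<and> u \<in> V \<and> v \<in> V) = E"
  using g unfolding graph_def by (intro ext) blast

lemma reach: "v \<in> V \<Longrightarrow> \<exists>n. (E ^^ n) v0 v"
  using cg v0 unfolding connected_graph_def conn_in_def restr_eq
  by (auto intro: rtranclp_imp_relpowp)

lemma dist1: "v \<in> V \<Longrightarrow> (E ^^ dist v) v0 v"
  unfolding dist_def using reach by (metis LeastI_ex)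

lemma dist2: "(E ^^ n) v0 v \<Longrightarrow> dist v \<le> n"
  unfolding dist_def by (rule Least_le)

lemma dist_v0: "dist v0 = 0"
  using dist2[of 0 v0] by simp

lemma dist0: "v \<in> V \<Longrightarrow> dist v = 0 \<Longrightarrow> v = v0"
  using dist1[of v] by simp

lemma dist_edge: "E u v \<Longrightarrow> dist v \<le> dist u + 1"
proof -
  assume e: "E u v"
  then have "u \<in> V" using graph_V[OF g] by blast
  then have "(E ^^ Suc (dist u)) v0 v" using dist1 e by auto
  then show ?thesis using dist2 by fastforce
qed

lemma dist_down: assumes "v \<in> V" "v \<noteq> v0" shows "\<exists>u. E v u \<and> dist u + 1 = dist v"
proof -
  have "dist v \<noteq> 0" using dist0 assms by blast
  then obtain k where k: "dist v = Suc k" by (cases "dist v") auto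
  then have "(E ^^ Suc k) v0 v" using dist1 assms by metis
  then obtain u where u: "(E ^^ k) v0 u" "E u v" by auto
  have "dist u \<le> k" using dist2 u by blast
  moreover have "dist v \<le> dist u + 1" using dist_edge u by blast
  ultimately have "dist u + 1 = dist v" using k by simp
  then show ?thesis using u graph_sym[OF g] by blast
qed

definition par :: "'a \<Rightarrow> 'a" where
  "par v = (if v = v0 then v0 else SOME u. E v u \<and> dist u + 1 = dist v)"

lemma par_v0[simp]: "par v0 = v0" unfolding par_def by simp

lemma par_prop: assumes "v \<in> V" "v \<noteq> v0" shows "E v (par v) \<and> dist (par v) + 1 = dist v"
  using someI_ex[OF dist_down[OF assms]] assms unfolding par_def by simp

lemma par_V: "v \<in> V \<Longrightarrow> par v \<in> V"
  using par_prop graph_V[OF g] v0 by (cases "v = v0") auto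

lemma par_dist: assumes "v \<in> V" shows "dist (par v) = dist v - 1"
proof (cases "v = v0")
  case True then show ?thesis by (simp add: dist_v0)
next
  case False then show ?thesis using par_prop[of v] assms by fastforce
qed

lemma parn_V: "v \<in> V \<Longrightarrow> (par ^^ n) v \<in> V"
  by (induction n) (auto simp: par_V)

lemma parn_dist: "v \<in> V \<Longrightarrow> dist ((par ^^ n) v) = dist v - n"
  by (induction n) (auto simp: par_dist parn_V)

lemma parn_unique:
  assumes "u \<in> V" "dist ((par ^^ a) u) = dist ((par ^^ b) u)"
  shows "(par ^^ a) u = (par ^^ b) u"
proof (cases "a = b")
  case False
  then have "dist u - a = 0" "dist u - b = 0" using assms parn_dist by auto
  then show ?thesis using dist0 parn_V parn_dist assms by metis
qed simp

lemma same_level: "x \<in> V \<Longrightarrow> y \<in> V \<Longrightarrow> dist x = dist y \<Longrightarrow> (\<exists>a. (par^^a) u = x) \<Longrightarrow> (\<exists>b. (par^^b) u = y) \<Longrightarrow> u \<in> V \<Longrightarrow> x = y"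
  using parn_unique by blast

context fixes U :: "'a set" assumes UV: "U \<subseteq> V" and Uinf: "infinite U"
begin

definition D :: "'a \<Rightarrow> 'a set" where "D v = {u \<in> U. \<exists>n. (par ^^ n) u = v}"

lemma D_v0: "D v0 = U"
proof -
  have "(par ^^ dist u) u = v0" if "u \<in> U" for u
    using that UV parn_dist[of u "dist u"] parn_V dist0 by auto
  then show ?thesis unfolding D_def by blast
qed

lemma child_aux: "(par ^^ n) u = v \<Longrightarrow> u = v \<or> (\<exists>c. par c = v \<and> c \<noteq> v \<and> (\<exists>m. (par ^^ m) u = c))"
proof (induction n)
  case (Suc n)
  show ?case
  proof (cases "(par ^^ n) u = v")
    case True then show ?thesis using Suc by blast
  next
    case False then show ?thesis using Suc.prems by auto
  qed
qed simp

lemma D_child: assumes "v \<in> V" "infinite (D v)"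
  shows "\<exists>c. E v c \<and> par c = v \<and> c \<noteq> v \<and> infinite (D c)"
proof (rule ccontr)
  assume na: "\<not> ?thesis"
  let ?C = "{c. E v c \<and> par c = v \<and> c \<noteq> v}"
  have fC: "finite ?C" using lf assms(1) unfolding locally_finite_def by (auto intro: finite_subset)
  have "D v \<subseteq> {v} \<union> (\<Union>c\<in>?C. D c)"
  proof
    fix u assume u: "u \<in> D v"
    then obtain n where n: "(par ^^ n) u = v" "u \<in> U" unfolding D_def by blast
    show "u \<in> {v} \<union> (\<Union>c\<in>?C. D c)"
    proof (cases "u = v")
      case False
      then obtain c m where c: "par c = v" "c \<noteq> v" "(par ^^ m) u = c" using child_aux[OF n(1)] by blast
      have "c \<in> V" using c(3) parn_V n(2) UV by blast
      have "c \<noteq> v0" using c by auto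
      then have "E c v" using par_prop[OF \<open>c \<in> V\<close>] c by simp
      then have "E v c" using graph_sym[OF g] by blast
      then show ?thesis using c n(2) unfolding D_def by blast
    qed simp
  qed
  moreover have "finite ({v} \<union> (\<Union>c\<in>?C. D c))" using fC na by auto
  ultimately show False using assms(2) finite_subset by blast
qed

primrec ray :: "nat \<Rightarrow> 'a" where
  "ray 0 = v0"
| "ray (Suc k) = (SOME c. E (ray k) c \<and> par c = ray k \<and> c \<noteq> ray k \<and> infinite (D c))"

lemma ray_inv: "ray k \<in> V \<and> infinite (D (ray k)) \<and> dist (ray k) = k"
proof (induction k)
  case 0 then show ?case using v0 D_v0 Uinf dist_v0 by simp
next
  case (Suc k)
  have "\<exists>c. E (ray k) c \<and> par c = ray k \<and> c \<noteq> ray k \<and> infinite (D c)" using D_child Suc by blast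
  then have c: "E (ray k) (ray (Suc k)) \<and> par (ray (Suc k)) = ray k \<and> ray (Suc k) \<noteq> ray k \<and> infinite (D (ray (Suc k)))"
    unfolding ray.simps by (rule someI_ex)
  then have V: "ray (Suc k) \<in> V" using graph_V[OF g] by blast
  have "ray (Suc k) \<noteq> v0" using c by auto
  then have e1: "dist (par (ray (Suc k))) + 1 = dist (ray (Suc k))" using par_prop[OF V] by blast
  have e2: "par (ray (Suc k)) = ray k" using c by blast
  have "dist (ray (Suc k)) = Suc k" using e1 e2 Suc by (metis Suc_eq_plus1)
  then show ?case using V c by blast
qed

lemma ray_edge: "E (ray k) (ray (Suc k))"
proof -
  have "\<exists>c. E (ray k) c \<and> par c = ray k \<and> c \<noteq> ray k \<and> infinite (D c)" using D_child ray_inv by blast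
  then show ?thesis unfolding ray.simps by (rule someI2_ex) blast
qed

lemma ray_is_ray: "is_ray V E ray"
  unfolding is_ray_def
proof (intro conjI allI)
  show "inj ray"
  proof (rule injI)
    fix x y assume "ray x = ray y"
    then have "dist (ray x) = dist (ray y)" by simp
    then show "x = y" using ray_inv[of x] ray_inv[of y] by simp
  qed
qed (use ray_inv ray_edge in auto)

definition anc :: "nat \<Rightarrow> 'a \<Rightarrow> 'a" where "anc t u = (par ^^ (dist u - t)) u"

lemma anc_V: "u \<in> V \<Longrightarrow> anc t u \<in> V" unfolding anc_def by (rule parn_V)
lemma anc_dist: "u \<in> V \<Longrightarrow> t \<le> dist u \<Longrightarrow> dist (anc t u) = t"
  unfolding anc_def by (simp add: parn_dist)
lemma anc_top: "anc (dist u) u = u" unfolding anc_def by simp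
lemma anc_step: assumes "u \<in> V" "t < dist u" shows "E (anc t u) (anc (Suc t) u)"
proof -
  have eq: "anc t u = par (anc (Suc t) u)"
    unfolding anc_def using assms(2) by (metis Suc_diff_Suc comp_apply funpow.simps(2))
  have "anc (Suc t) u \<noteq> v0" using anc_dist[OF assms(1), of "Suc t"] assms dist_v0 by auto
  then have "E (anc (Suc t) u) (anc t u)" using par_prop anc_V assms eq by auto
  then show ?thesis using graph_sym[OF g] by blast
qed

lemma D_dist: assumes "u \<in> D (ray k)" shows "k \<le> dist u" "anc k u = ray k"
proof -
  obtain n where n: "(par ^^ n) u = ray k" "u \<in> U" using assms unfolding D_def by blast
  have uV: "u \<in> V" using n UV by blast
  have "dist u - n = k" using parn_dist[OF uV, of n] n ray_inv by simp
  then show "k \<le> dist u" by simp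
  have "dist (anc k u) = dist ((par^^n) u)" using anc_dist[OF uV] \<open>dist u - n = k\<close> n ray_inv by auto
  then show "anc k u = ray k" unfolding anc_def using parn_unique[OF uV] n by metis
qed

definition jj :: "nat \<Rightarrow> 'a \<Rightarrow> nat" where
  "jj k u = Max {t. k \<le> t \<and> t \<le> dist u \<and> anc t u = ray t}"

definition Qp :: "nat \<Rightarrow> 'a \<Rightarrow> 'a list" where
  "Qp k u = map (\<lambda>t. anc t u) [jj k u..<Suc (dist u)]"

lemma succ_upt: "(\<And>t. a \<le> t \<Longrightarrow> Suc t < b \<Longrightarrow> P t (Suc t)) \<Longrightarrow> successively P [a..<b]"
proof (induction "b - a" arbitrary: a)
  case 0 then show ?case by simp
next
  case (Suc x)
  then have ab: "a < b" by simp
  then have eq: "[a..<b] = a # [Suc a..<b]" by (simp add: upt_conv_Cons)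
  have "successively P [Suc a..<b]" using Suc by auto
  then show ?case unfolding eq successively_Cons using Suc.prems ab
    by (cases "Suc a < b") (auto simp: upt_conv_Cons)
qed

lemma Qp_props: assumes "u \<in> D (ray k)"
  shows "is_path V E (Qp k u)" "set (Qp k u) \<inter> range ray = {hd (Qp k u)}" "last (Qp k u) \<in> U"
    "\<forall>x\<in>set (Qp k u). k \<le> dist x \<and> dist x \<le> dist u"
proof -
  have uU: "u \<in> U" using assms unfolding D_def by blast
  then have uV: "u \<in> V" using UV by blast
  let ?T = "{t. k \<le> t \<and> t \<le> dist u \<and> anc t u = ray t}"
  have fT: "finite ?T" by (rule finite_subset[of _ "{..dist u}"]) auto
  have kT: "k \<in> ?T" using D_dist[OF assms] by simp
  have jT: "jj k u \<in> ?T" unfolding jj_def by (rule Max_in[OF fT]) (use kT in blast)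
  have jmax: "t \<in> ?T \<Longrightarrow> t \<le> jj k u" for t unfolding jj_def by (rule Max_ge[OF fT])
  have setQ: "set (Qp k u) = (\<lambda>t. anc t u) ` {jj k u..dist u}" unfolding Qp_def
    by (simp del: upt_Suc add: atLeastLessThanSuc_atLeastAtMost)
  have ne: "Qp k u \<noteq> []" using jT unfolding Qp_def by simp
  have "[jj k u..<Suc (dist u)] = jj k u # [Suc (jj k u)..<Suc (dist u)]" by (rule upt_conv_Cons) (use jT in auto)
  then have hd: "hd (Qp k u) = anc (jj k u) u" unfolding Qp_def by simp
  have inj: "inj_on (\<lambda>t. anc t u) {jj k u..<Suc (dist u)}"
  proof (rule inj_onI)
    fix x y assume xy: "x \<in> {jj k u..<Suc (dist u)}" "y \<in> {jj k u..<Suc (dist u)}" "anc x u = anc y u"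
    then have "dist (anc x u) = dist (anc y u)" by simp
    then show "x = y" using anc_dist[OF uV, of x] anc_dist[OF uV, of y] xy(1,2) by simp
  qed
  show "is_path V E (Qp k u)" unfolding is_path_def
  proof (intro conjI)
    show "Qp k u \<noteq> []" by fact
    show "distinct (Qp k u)" unfolding Qp_def using inj by (simp add: distinct_map del: upt_Suc)
    show "set (Qp k u) \<subseteq> V" using setQ anc_V uV by auto
    show "successively E (Qp k u)" unfolding Qp_def successively_map
      by (rule succ_upt) (use anc_step uV in auto)
  qed
  have jT': "k \<le> jj k u \<and> jj k u \<le> dist u \<and> anc (jj k u) u = ray (jj k u)" using jT by (rule CollectD)
  then have jle: "jj k u \<le> dist u" and kj: "k \<le> jj k u" and ja: "anc (jj k u) u = ray (jj k u)" by auto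
  show "set (Qp k u) \<inter> range ray = {hd (Qp k u)}"
  proof
    have h1: "hd (Qp k u) \<in> set (Qp k u)" using ne by (rule hd_in_set)
    have h2: "hd (Qp k u) = ray (jj k u)" using hd ja by simp
    show "{hd (Qp k u)} \<subseteq> set (Qp k u) \<inter> range ray" using h1 h2 by blast
    show "set (Qp k u) \<inter> range ray \<subseteq> {hd (Qp k u)}"
    proof
      fix x assume x: "x \<in> set (Qp k u) \<inter> range ray"
      then have x1: "x \<in> (\<lambda>t. anc t u) ` {jj k u..dist u}" and x2: "x \<in> range ray" using setQ by auto
      from x1 obtain t where t1: "x = anc t u" "jj k u \<le> t" "t \<le> dist u" by auto
      from x2 obtain t' where t2: "x = ray t'" by auto
      note t = t1 t2
      have "dist (anc t u) = t" using t(3) anc_dist[OF uV] by blast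
      moreover have "dist (ray t') = t'" using ray_inv[of t'] by blast
      ultimately have "t' = t" using t(1,4) by metis
      then have at: "anc t u = ray t" using t(1,4) by metis
      have "k \<le> t" using kj t(2) by linarith
      then have "t \<in> ?T" using t(3) at by blast
      then have "t \<le> jj k u" by (rule jmax)
      then have "t = jj k u" using t(2) by linarith
      then show "x \<in> {hd (Qp k u)}" using t hd by simp
    qed
  qed
  have "last (Qp k u) = anc (dist u) u" unfolding Qp_def using jle by (simp add: last_map del: upt_Suc)
  then show "last (Qp k u) \<in> U" by (simp add: anc_top uU)
  show "\<forall>x\<in>set (Qp k u). k \<le> dist x \<and> dist x \<le> dist u"
  proof
    fix x assume "x \<in> set (Qp k u)"
    then obtain t where t: "x = anc t u" "jj k u \<le> t" "t \<le> dist u" using setQ by auto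
    then show "k \<le> dist x \<and> dist x \<le> dist u" using anc_dist[OF uV, of t] kj by simp
  qed
qed

definition pick :: "nat \<Rightarrow> 'a" where "pick k = (SOME u. u \<in> D (ray k))"

lemma pick_D: "pick k \<in> D (ray k)"
proof -
  have "D (ray k) \<noteq> {}" using ray_inv[of k] by (metis finite.emptyI)
  then show ?thesis unfolding pick_def by (simp add: some_in_eq)
qed

primrec KK :: "nat \<Rightarrow> nat" where
  "KK 0 = 0" | "KK (Suc n) = Suc (dist (pick (KK n)))"

lemma KK_less: "KK n < KK (Suc n)"
  using D_dist(1)[OF pick_D] by (simp add: le_imp_less_Suc)

lemma KK_mono: "n < m \<Longrightarrow> KK (Suc n) \<le> KK m"
proof (induction m)
  case (Suc m) then show ?case using KK_less[of m] by (cases "n = m") auto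
qed simp

lemma comb_exists: "\<exists>r P. is_comb V E r P \<and> r = ray \<and> (\<forall>i. last (P i) \<in> U)"
proof (intro exI conjI)
  let ?P = "\<lambda>n. Qp (KK n) (pick (KK n))"
  have lev: "\<forall>x\<in>set (?P n). KK n \<le> dist x \<and> dist x < KK (Suc n)" for n
    using Qp_props(4)[OF pick_D] by (simp add: less_Suc_eq_le)
  show "is_comb V E ray ?P" unfolding is_comb_def
  proof (intro conjI allI impI)
    show "is_ray V E ray" by (rule ray_is_ray)
    fix i show "is_path V E (?P i)" "set (?P i) \<inter> range ray = {hd (?P i)}" using Qp_props[OF pick_D] by auto
  next
    fix i j :: nat assume "i \<noteq> j"
    then have "i < j \<or> j < i" by arith
    then show "set (?P i) \<inter> set (?P j) = {}"
    proof
      assume "i < j" then show ?thesis using lev[of i] lev[of j] KK_mono[of i j] by fastforce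
    next
      assume "j < i" then show ?thesis using lev[of i] lev[of j] KK_mono[of j i] by fastforce
    qed
  qed
  show "\<forall>i. last (?P i) \<in> U" using Qp_props(3)[OF pick_D] by simp
qed simp

end
end

lemma exists_end_closure:
  assumes g: "graph V E" and lf: "locally_finite V E" and cg: "connected_graph V E"
    and UV: "U \<subseteq> V" and Uinf: "infinite U"
  shows "\<exists>\<omega>. is_end V E \<omega> \<and> end_in_closure V E \<omega> U"
proof -
  obtain v0 where v0: "v0 \<in> V" using cg unfolding connected_graph_def by blast
  interpret bfs V E v0 using g lf cg v0 by unfold_locales
  obtain r P where rP: "is_comb V E r P" "\<forall>i. last (P i) \<in> U"
    using comb_exists[OF UV Uinf] by blast
  have rr: "is_ray V E r" using rP unfolding is_comb_def by blast
  let ?w = "{r'. is_ray V E r' \<and> ray_equiv V E r r'}"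
  have "is_end V E ?w" unfolding is_end_def using rr by blast
  moreover have "end_in_closure V E ?w U" unfolding end_in_closure_def
    using rP rr ray_equiv_refl[OF rr] by blast
  ultimately show ?thesis by blast
qed




lemma path_stay:
  assumes g: "graph V E" and s: "is_sep V E C D"
  shows "successively E xs \<Longrightarrow> set xs \<subseteq> V - (C \<inter> D) \<Longrightarrow> xs \<noteq> [] \<Longrightarrow> hd xs \<in> D - C \<Longrightarrow> set xs \<subseteq> D - C"
proof (induction xs)
  case (Cons x xs)
  show ?case
  proof (cases "xs = []")
    case False
    have e: "E x (hd xs)" using Cons.prems(1) False by (simp add: successively_Cons)
    have "hd xs \<in> set xs" using False by simp
    then have h: "hd xs \<in> V - (C \<inter> D)" using Cons.prems(2) by auto
    have "hd xs \<in> D - C"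
    proof (rule ccontr)
      assume "hd xs \<notin> D - C"
      then have "hd xs \<in> C - D" using h s unfolding is_sep_def by blast
      moreover have "x \<in> D - C" using Cons.prems(4) by simp
      ultimately show False using e graph_sym[OF g] s unfolding is_sep_def by blast
    qed
    then have "set xs \<subseteq> D - C" using Cons False by (simp add: successively_Cons)
    then show ?thesis using Cons.prems(4) by simp
  qed (use Cons.prems in simp)
qed simp

lemma tooth_lemma:
  assumes g: "graph V E" and c: "is_comb V E r P" and t: "\<forall>i. last (P i) \<in> U"
    and s: "is_sep V E C D" and f: "finite (C \<inter> D)" and fr: "finite {n. r n \<notin> D - C}"
  shows "\<exists>u\<in>U. u \<in> D - C"
proof -
  obtain J where J: "\<forall>n\<in>{n. r n \<notin> D - C}. n < J" using fr finite_nat_set_iff_bounded by blast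
  have disj: "\<And>i j. i \<noteq> j \<Longrightarrow> set (P i) \<inter> set (P j) = {}" using c unfolding is_comb_def by blast
  have path: "\<And>i. is_path V E (P i)" and hdr: "\<And>i. set (P i) \<inter> range r = {hd (P i)}"
    using c unfolding is_comb_def by auto
  have hdin: "hd (P i) \<in> set (P i)" for i using path[of i] unfolding is_path_def by simp
  have inj: "inj (\<lambda>i. hd (P i))"
  proof (rule injI)
    fix i j assume "hd (P i) = hd (P j)"
    then show "i = j" using disj hdin by (metis disjoint_iff)
  qed
  let ?I1 = "(\<lambda>i. hd (P i)) -` (r ` {..<J})"
  have f1: "finite ?I1" using inj by (intro finite_vimageI) auto
  let ?I2 = "\<Union>x\<in>C \<inter> D. {i. x \<in> set (P i)}"
  have one: "finite {i. x \<in> set (P i)}" for x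
  proof (cases "\<exists>i0. x \<in> set (P i0)")
    case True
    then obtain i0 where "x \<in> set (P i0)" by blast
    then have "{i. x \<in> set (P i)} \<subseteq> {i0}" using disj by blast
    then show ?thesis using finite_subset by blast
  qed simp
  have f2: "finite ?I2" using f one by blast
  obtain i where i: "i \<notin> ?I1 \<union> ?I2" using ex_new_if_finite[OF infinite_UNIV_nat, of "?I1 \<union> ?I2"] f1 f2 by blast
  have "hd (P i) \<in> range r" using hdr[of i] by blast
  then obtain n where n: "hd (P i) = r n" by blast
  have "n \<ge> J" using i n by (metis lessThan_iff not_le image_eqI vimageI UnI1)
  then have hdDC: "hd (P i) \<in> D - C" using J n by (metis (mono_tags, lifting) mem_Collect_eq not_le)
  have av: "set (P i) \<subseteq> V - (C \<inter> D)" using i path[of i] unfolding is_path_def by blast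
  have "set (P i) \<subseteq> D - C"
    using path_stay[OF g s] path[of i] av hdDC unfolding is_path_def by blast
  moreover have "last (P i) \<in> set (P i)" using path[of i] unfolding is_path_def by simp
  ultimately show ?thesis using t by blast
qed

lemma end_base: "is_end V E \<omega> \<Longrightarrow> \<exists>r. is_ray V E r \<and> r \<in> \<omega>"
  unfolding is_end_def using ray_equiv_refl by blast

lemma pt_one:
  assumes "is_end V E \<omega>" "(C, D) \<in> end_pre_tangle V E \<omega>"
  shows "(D, C) \<notin> end_pre_tangle V E \<omega>"
proof
  assume a: "(D, C) \<in> end_pre_tangle V E \<omega>"
  obtain r where r: "r \<in> \<omega>" using end_base[OF assms(1)] by blast
  have "finite {n. r n \<notin> D - C}" "finite {n. r n \<notin> C - D}" using assms(2) a r unfolding end_pre_tangle_def by auto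
  then have "finite ({n. r n \<notin> D - C} \<union> {n. r n \<notin> C - D})" by blast
  moreover have "{n. r n \<notin> D - C} \<union> {n. r n \<notin> C - D} = UNIV" by blast
  ultimately have "finite (UNIV :: nat set)" by metis
  then show False by simp
qed

lemma distinct_ends_sep:
  assumes g: "graph V E" and e1: "is_end V E \<omega>1" and e2: "is_end V E \<omega>2" and ne: "\<omega>1 \<noteq> \<omega>2"
  shows "\<exists>C D. is_sep V E C D \<and> (C, D) \<in> end_pre_tangle V E \<omega>1 \<and> (D, C) \<in> end_pre_tangle V E \<omega>2"
proof -
  obtain r1 where r1: "is_ray V E r1" "\<omega>1 = {r'. is_ray V E r' \<and> ray_equiv V E r1 r'}" using e1 unfolding is_end_def by blast
  obtain r2 where r2: "is_ray V E r2" "\<omega>2 = {r'. is_ray V E r' \<and> ray_equiv V E r2 r'}" using e2 unfolding is_end_def by blast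
  have "\<not> ray_equiv V E r1 r2"
  proof
    assume eq: "ray_equiv V E r1 r2"
    have "ray_equiv V E r1 r' \<longleftrightarrow> ray_equiv V E r2 r'" for r'
      using ray_equiv_trans[OF g r1(1) ray_equiv_sym[OF g eq]] ray_equiv_trans[OF g r2(1) eq] by blast
    then have "\<omega>1 = \<omega>2" using r1 r2 by auto
    then show False using ne by simp
  qed
  then obtain S where S: "finite S" "\<not> (\<exists>m n. (\<forall>i\<ge>m. r1 i \<notin> S) \<and> (\<forall>j\<ge>n. r2 j \<notin> S)
       \<and> conn_in E (V - S) (r1 m) (r2 n))" unfolding ray_equiv_def by blast
  obtain m0 where m0: "\<forall>i\<ge>m0. r1 i \<notin> S" using ray_tail_avoid[OF r1(1) S(1)] by blast
  define K where "K = {y. conn_in E (V - S) (r1 m0) y}"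
  have KV: "K \<subseteq> V - S" unfolding K_def using conn_mem by fastforce
  define C where "C = V - K"
  define D where "D = K \<union> (S \<inter> V)"
  have sep: "is_sep V E C D" unfolding is_sep_def
  proof (intro conjI ballI)
    show "C \<union> D = V" unfolding C_def D_def using KV by blast
    fix x y assume x: "x \<in> C - D" and y: "y \<in> D - C"
    show "\<not> E x y"
    proof
      assume e: "E x y"
      have yK: "y \<in> K" using y unfolding C_def D_def by blast
      have xV: "x \<in> V - S" using x unfolding C_def D_def by blast
      have "conn_in E (V - S) y x" using e KV yK xV graph_sym[OF g] by (intro conn_edge) auto
      then have "x \<in> K" using yK unfolding K_def by (blast intro: conn_trans)
      then show False using x unfolding C_def by blast
    qed
  qed
  have fin: "finite (C \<inter> D)" unfolding C_def D_def using S(1) by (auto intro: finite_subset)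
  have DC: "D - C = K" unfolding C_def D_def using KV by blast
  have CD: "C - D = V - K - S" unfolding C_def D_def by blast
  have P1: "(C, D) \<in> end_pre_tangle V E \<omega>1" unfolding end_pre_tangle_def
  proof (clarsimp simp only: prod.simps mem_Collect_eq, intro conjI ballI)
    show "is_sep V E C D" "finite (C \<inter> D)" by fact+
    fix r assume "r \<in> \<omega>1"
    then have r: "is_ray V E r" "ray_equiv V E r1 r" using r1 by auto
    then obtain m p where mp: "\<forall>i\<ge>m. r1 i \<notin> S" "\<forall>j\<ge>p. r j \<notin> S" "conn_in E (V - S) (r1 m) (r p)"
      using S(1) unfolding ray_equiv_def by blast
    have "r q \<in> K" if "q \<ge> p" for q
    proof -
      have "conn_in E (V - S) (r1 m0) (r1 m)" using ray_tail_conn2[OF g r1(1) m0 mp(1)] .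
      moreover have "conn_in E (V - S) (r p) (r q)" using ray_tail_conn[OF r(1) mp(2) that] .
      ultimately show ?thesis using mp(3) unfolding K_def by (blast intro: conn_trans)
    qed
    then have "{n. r n \<notin> D - C} \<subseteq> {..<p}" using DC by force
    then show "finite {n. r n \<notin> D - C}" using finite_subset by blast
  qed
  have P2: "(D, C) \<in> end_pre_tangle V E \<omega>2" unfolding end_pre_tangle_def
  proof (clarsimp simp only: prod.simps mem_Collect_eq, intro conjI ballI)
    show "is_sep V E D C" using is_sep_sym[OF g sep] .
    show "finite (D \<inter> C)" using fin by (simp add: Int_commute)
    fix r assume "r \<in> \<omega>2"
    then have r: "is_ray V E r" "ray_equiv V E r2 r" using r2 by auto
    then obtain n p where np: "\<forall>i\<ge>n. r2 i \<notin> S" "\<forall>j\<ge>p. r j \<notin> S" "conn_in E (V - S) (r2 n) (r p)"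
      using S(1) unfolding ray_equiv_def by blast
    have "r q \<in> C - D" if "q \<ge> p" for q
    proof -
      have rq: "r q \<notin> S" "r q \<in> V" using np(2) that r(1) unfolding is_ray_def by auto
      have "r q \<notin> K"
      proof
        assume "r q \<in> K"
        then have a: "conn_in E (V - S) (r1 m0) (r q)" unfolding K_def by simp
        have "conn_in E (V - S) (r q) (r p)" using conn_sym[OF g ray_tail_conn[OF r(1) np(2) that]] .
        moreover have "conn_in E (V - S) (r p) (r2 n)" using conn_sym[OF g np(3)] .
        ultimately have "conn_in E (V - S) (r1 m0) (r2 n)" using a by (blast intro: conn_trans)
        then show False using S(2) m0 np(1) by blast
      qed
      then show ?thesis using rq CD by blast
    qed
    then have "{n. r n \<notin> C - D} \<subseteq> {..<p}" by (metis (mono_tags) lessThan_iff mem_Collect_eq not_le subsetI)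
    then show "finite {n. r n \<notin> C - D}" using finite_subset by blast
  qed
  show ?thesis using sep P1 P2 by blast
qed




lemma first_hit:
  assumes g: "graph V E" and c: "conn_in E V v x" and v: "v \<notin> F" and x: "x \<in> F"
  shows "\<exists>t f. conn_in E (V - F) v t \<and> E t f \<and> f \<in> F"
proof -
  have r: "(\<lambda>u w. E u w \<and> u \<in> V \<and> w \<in> V)\<^sup>*\<^sup>* v x" and vV: "v \<in> V" using c unfolding conn_in_def by auto
  have "conn_in E (V - F) v x \<or> (\<exists>t f. conn_in E (V - F) v t \<and> E t f \<and> f \<in> F)" using r
  proof (induction rule: rtranclp_induct)
    case base
    have "conn_in E (V - F) v v" using vV v by (intro conn_refl) blast
    then show ?case by (rule disjI1)
  next
    case (step y z)
    show ?case
    proof (cases "conn_in E (V - F) v y")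
      case cy: True
      show ?thesis
      proof (cases "z \<in> F")
        case True
        have "E y z" using step(2) by blast
        then show ?thesis using cy True by blast
      next
        case False
        have "y \<in> V - F" using conn_mem[OF cy] by (rule conjunct2)
        moreover have "z \<in> V - F" using step(2) False by blast
        moreover have "E y z" using step(2) by blast
        ultimately have "conn_in E (V - F) y z" by (intro conn_edge)
        then have "conn_in E (V - F) v z" by (rule conn_trans[OF cy])
        then show ?thesis by (rule disjI1)
      qed
    next
      case False then show ?thesis using step(3) by blast
    qed
  qed
  moreover have "\<not> conn_in E (V - F) v x" using x conn_mem[of E "V - F" v x] by blast
  ultimately show ?thesis by blast
qed

lemma comp_conn:
  assumes g: "graph V E" and "component V E X K" "u \<in> K" "w \<in> K"
  shows "conn_in E (V - X) u w"
proof -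
  obtain x0 where K: "K = {y. conn_in E (V - X) x0 y}" using assms(2) unfolding component_def by blast
  have cu: "conn_in E (V - X) x0 u" using assms(3) K by blast
  have cw: "conn_in E (V - X) x0 w" using assms(4) K by blast
  show ?thesis by (rule conn_trans[OF conn_sym[OF g cu] cw])
qed

lemma comp_V: assumes "component V E X K" shows "K \<subseteq> V - X"
proof
  fix y assume y: "y \<in> K"
  obtain x0 where K: "K = {y. conn_in E (V - X) x0 y}" using assms unfolding component_def by blast
  have "conn_in E (V - X) x0 y" using y K by blast
  then show "y \<in> V - X" using conn_mem[of E "V - X" x0 y] by blast
qed

lemma comp_ne: assumes "component V E X K" shows "K \<noteq> {}"
proof -
  obtain x0 where K: "x0 \<in> V - X" "K = {y. conn_in E (V - X) x0 y}" using assms unfolding component_def by blast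
  have "conn_in E (V - X) x0 x0" using K(1) by (rule conn_refl)
  then show ?thesis using K(2) by blast
qed

lemma AB_infinite:
  fixes a b :: "nat \<Rightarrow> 'a set"
  assumes g: "graph V E" and cg: "connected_graph V E" and lf: "locally_finite V E"
    and mono: "\<And>i j. i \<le> j \<Longrightarrow> a i \<subseteq> a j \<and> b j \<subseteq> b i"
    and inj: "\<And>i j. i \<noteq> j \<Longrightarrow> (a i, b i) \<noteq> (a j, b j)"
    and sep: "\<And>i. is_sep V E (a i) (b i)"
    and tB: "\<And>i. \<exists>K. tight_component V E (a i \<inter> b i) K \<and> K \<subseteq> b i - a i"
    and tA: "\<And>i. \<exists>K. tight_component V E (a i \<inter> b i) K \<and> K \<subseteq> a i - b i"
    and A: "A = (\<Union>i. a i)" and B: "B = (\<Inter>i. b i)" and Bne: "B \<noteq> {}"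
  shows "infinite (A \<inter> B)"
proof
  assume finF: "finite (A \<inter> B)"
  define F where "F = A \<inter> B"
  have aV: "a i \<subseteq> V" and bV: "b i \<subseteq> V" for i using sep[of i] unfolding is_sep_def by auto
  have sepAB: "is_sep V E A B" unfolding is_sep_def
  proof (intro conjI ballI)
    show "A \<union> B = V"
    proof
      show "A \<union> B \<subseteq> V" using aV bV A B by blast
      show "V \<subseteq> A \<union> B"
      proof
        fix v assume "v \<in> V"
        then have "v \<in> a i \<or> v \<in> b i" for i using sep[of i] unfolding is_sep_def by blast
        then show "v \<in> A \<union> B" using A B by blast
      qed
    qed
    fix x y assume x: "x \<in> A - B" and y: "y \<in> B - A"
    obtain i k where "x \<in> a i" "x \<notin> b k" using x A B by blast
    then have "x \<in> a (max i k) - b (max i k)" using mono[of i "max i k"] mono[of k "max i k"] by auto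
    moreover have "y \<in> b (max i k) - a (max i k)" using y A B by blast
    ultimately show "\<not> E x y" using sep[of "max i k"] unfolding is_sep_def by blast
  qed
  have Fne: "F \<noteq> {}"
  proof
    assume F0: "F = {}"
    obtain K0 where K0: "tight_component V E (a 0 \<inter> b 0) K0" "K0 \<subseteq> a 0 - b 0" using tA by blast
    then obtain x0 where "x0 \<in> K0" using comp_ne unfolding tight_component_def by blast
    then have x0: "x0 \<in> A - B" "x0 \<in> V" using K0 A B aV by blast+
    obtain y where y: "y \<in> B" using Bne by blast
    then have yV: "y \<in> V" using B bV by blast
    have "conn_in E V x0 y" using cg x0 yV unfolding connected_graph_def by blast
    then have "conn_in E (V - (A \<inter> B)) x0 y" using F0 F_def by simp
    then have "y \<in> A - B" using conn_stay[OF g sepAB] x0 by blast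
    then show False using y by blast
  qed
  then obtain x where xF: "x \<in> F" by blast
  have FV: "F \<subseteq> V" using F_def A aV by blast
  define gi where "gi f = (SOME i. f \<in> a i)" for f
  have gi: "f \<in> F \<Longrightarrow> f \<in> a (gi f)" for f unfolding gi_def F_def A by (rule someI_ex) blast
  define j where "j = Max (gi ` F)"
  have FX: "F \<subseteq> a i \<inter> b i" if "i \<ge> j" for i
  proof
    fix f assume f: "f \<in> F"
    have "gi f \<le> j" unfolding j_def using finF f F_def by simp
    then have "f \<in> a i" using gi[OF f] mono[of "gi f" i] that by auto
    moreover have "f \<in> b i" using f F_def B by blast
    ultimately show "f \<in> a i \<inter> b i" by blast
  qed
  define Pr where "Pr i y = (\<exists>K. tight_component V E (a i \<inter> b i) K \<and> K \<subseteq> b i - a i \<and> y \<in> K \<and> E y x)" for i y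
  have exPr: "\<exists>y. Pr i y" if "i \<ge> j" for i
  proof -
    obtain K where K: "tight_component V E (a i \<inter> b i) K" "K \<subseteq> b i - a i" using tB by blast
    then have "x \<in> nbhd V E K" using FX[OF that] xF unfolding tight_component_def by blast
    then obtain u where "u \<in> K" "E u x" unfolding nbhd_def by blast
    then show ?thesis unfolding Pr_def using K by blast
  qed
  define yf where "yf i = (SOME y. Pr i y)" for i
  have yf: "i \<ge> j \<Longrightarrow> Pr i (yf i)" for i unfolding yf_def using exPr by (rule someI_ex)
  have "yf ` {j..} \<subseteq> {y. E x y}" using yf graph_sym[OF g] unfolding Pr_def by fastforce
  moreover have "finite {y. E x y}" using lf xF FV unfolding locally_finite_def by blast
  ultimately have fimg: "finite (yf ` {j..})" using finite_subset by blast
  have "infinite {j::nat..}" by (simp add: infinite_Ici)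
  then obtain w where "w \<in> yf ` {j..}" and Iinf: "infinite (yf -` {w} \<inter> {j..})"
    using inf_img_fin_dom'[OF fimg] by blast
  define I where "I = yf -` {w} \<inter> {j..}"
  have IPr: "i \<in> I \<Longrightarrow> Pr i w \<and> i \<ge> j" for i unfolding I_def using yf by auto
  have Iinf': "infinite I" using Iinf I_def by simp
  have wA: "w \<notin> A"
  proof
    assume "w \<in> A"
    then obtain m where m: "w \<in> a m" using A by blast
    obtain i where i: "i \<in> I" "i \<ge> m" using Iinf' infinite_nat_iff_unbounded_le by blast
    then have "w \<in> b i - a i" using IPr[OF i(1)] unfolding Pr_def by blast
    then show False using m mono[OF i(2)] by blast
  qed
  have wB: "w \<in> B"
  proof -
    obtain i where "i \<in> I" using Iinf' by (metis finite.emptyI ex_in_conv)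
    then have "w \<in> V" using IPr bV unfolding Pr_def by blast
    then show ?thesis using sepAB wA unfolding is_sep_def by blast
  qed
  have XF: "a i \<inter> b i = F" if iI: "i \<in> I" for i
  proof
    show "F \<subseteq> a i \<inter> b i" using FX IPr[OF iI] by blast
    show "a i \<inter> b i \<subseteq> F"
    proof
      fix y assume y: "y \<in> a i \<inter> b i"
      show "y \<in> F"
      proof (rule ccontr)
        assume yF: "y \<notin> F"
        obtain K where K: "tight_component V E (a i \<inter> b i) K" "K \<subseteq> b i - a i" "w \<in> K"
          using IPr[OF iI] unfolding Pr_def by blast
        then have "y \<in> nbhd V E K" using y unfolding tight_component_def by blast
        then obtain u where u: "u \<in> K" "E u y" unfolding nbhd_def by blast
        have "component V E (a i \<inter> b i) K" using K(1) unfolding tight_component_def by blast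
        then have "conn_in E (V - (a i \<inter> b i)) w u" using comp_conn[OF g _ K(3) u(1)] by blast
        moreover have "V - (a i \<inter> b i) \<subseteq> V - (B \<inter> A)" using FX[of i] IPr[OF iI] F_def by blast
        ultimately have "conn_in E (V - (B \<inter> A)) w u" by (rule conn_mono)
        then have "u \<in> B - A" using conn_stay[OF g is_sep_sym[OF g sepAB]] wA wB by blast
        moreover have "y \<in> A - B" using y yF F_def A by blast
        ultimately show False using u(2) graph_sym[OF g] sepAB unfolding is_sep_def by blast
      qed
    qed
  qed
  define T where "T = {t \<in> V - F. \<exists>f\<in>F. E t f}"
  have finT: "finite T"
  proof -
    have "T \<subseteq> (\<Union>f\<in>F. {t. E f t})" unfolding T_def using graph_sym[OF g] by blast
    moreover have "finite (\<Union>f\<in>F. {t. E f t})"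
    proof (rule finite_UN_I)
      show "finite F" using finF F_def by simp
      fix f assume "f \<in> F" then show "finite {t. E f t}" using lf FV unfolding locally_finite_def by blast
    qed
    ultimately show ?thesis using finite_subset by blast
  qed
  define G where "G Y = F \<union> {v \<in> V - F. \<exists>t\<in>Y. conn_in E (V - F) t v}" for Y
  define H where "H Y = (G Y, (V - G Y) \<union> F)" for Y
  have hit: "\<exists>t\<in>T. conn_in E (V - F) t v" if v: "v \<in> V - F" for v
  proof -
    have "conn_in E V v x" using cg v xF FV unfolding connected_graph_def by blast
    then obtain t f where tf: "conn_in E (V - F) v t" "E t f" "f \<in> F" using first_hit[OF g] v xF by blast
    have "t \<in> V - F" using conn_mem[OF tf(1)] by blast
    then have "t \<in> T" unfolding T_def using tf(2,3) by blast
    then show ?thesis using conn_sym[OF g tf(1)] by blast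
  qed
  have HI: "(a i, b i) = H (T \<inter> a i)" if iI: "i \<in> I" for i
  proof -
    have X: "a i \<inter> b i = F" using XF[OF iI] .
    have sep': "is_sep V E (a i) (b i)" by (rule sep)
    have aeq: "a i = G (T \<inter> a i)"
    proof
      show "a i \<subseteq> G (T \<inter> a i)"
      proof
        fix v assume va: "v \<in> a i"
        show "v \<in> G (T \<inter> a i)"
        proof (cases "v \<in> F")
          case False
          then have vV: "v \<in> V - F" using va aV by blast
          obtain t where t: "t \<in> T" "conn_in E (V - F) t v" using hit[OF vV] by blast
          have "v \<in> a i - b i" using va False X by blast
          moreover have "conn_in E (V - (a i \<inter> b i)) v t" using conn_sym[OF g t(2)] X by simp
          ultimately have "t \<in> a i - b i" using conn_stay[OF g sep'] by blast
          then show ?thesis unfolding G_def using t vV by blast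
        qed (simp add: G_def)
      qed
      show "G (T \<inter> a i) \<subseteq> a i"
      proof
        fix v assume "v \<in> G (T \<inter> a i)"
        then consider "v \<in> F" | t where "t \<in> T" "t \<in> a i" "conn_in E (V - F) t v" unfolding G_def by blast
        then show "v \<in> a i"
        proof cases
          case 1 then show ?thesis using X by blast
        next
          case 2
          then have "t \<in> a i - b i" using T_def X by blast
          moreover have "conn_in E (V - (a i \<inter> b i)) t v" using 2(3) X by simp
          ultimately show ?thesis using conn_stay[OF g sep'] by blast
        qed
      qed
    qed
    have beq: "b i = (V - a i) \<union> F" using sep' X bV[of i] unfolding is_sep_def by blast
    show ?thesis unfolding H_def using aeq beq by simp
  qed
  have "(\<lambda>i. (a i, b i)) ` I \<subseteq> H ` Pow T" using HI by blast
  then have "finite ((\<lambda>i. (a i, b i)) ` I)" using finT finite_subset by blast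
  moreover have "inj_on (\<lambda>i. (a i, b i)) I" using inj by (meson inj_onI)
  ultimately have "finite I" using finite_imageD by blast
  then show False using Iinf' by simp
qed


lemma tight_unpack:
  assumes g: "graph V E" and t: "tight_sep V E (Upair X Y)"
  shows "is_sep V E X Y \<and> (\<exists>K. tight_component V E (X \<inter> Y) K \<and> K \<subseteq> Y - X)
     \<and> (\<exists>K. tight_component V E (X \<inter> Y) K \<and> K \<subseteq> X - Y)"
proof -
  obtain A' B' where ab: "Upair X Y = Upair A' B'" "is_sep V E A' B'"
    "\<exists>K. tight_component V E (A' \<inter> B') K \<and> K \<subseteq> A' - B'" "\<exists>K. tight_component V E (A' \<inter> B') K \<and> K \<subseteq> B' - A'"
    using t unfolding tight_sep_def by blast
  from ab(1) have "(X = A' \<and> Y = B') \<or> (X = B' \<and> Y = A')" by simp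
  then show ?thesis
  proof
    assume "X = A' \<and> Y = B'" then show ?thesis using ab by blast
  next
    assume e: "X = B' \<and> Y = A'"
    have "X \<inter> Y = A' \<inter> B'" using e by blast
    then show ?thesis using ab e is_sep_sym[OF g ab(2)] by auto
  qed
qed

lemma closure_tooth:
  assumes g: "graph V E" and c: "end_in_closure V E \<omega> U" and p: "(C, D) \<in> end_pre_tangle V E \<omega>"
  shows "\<exists>u\<in>U. u \<in> D - C"
proof -
  obtain r P where rP: "is_comb V E r P" "r \<in> \<omega>" "\<forall>i. last (P i) \<in> U" using c unfolding end_in_closure_def by blast
  have "is_sep V E C D" "finite (C \<inter> D)" "finite {n. r n \<notin> D - C}" using p rP(2) unfolding end_pre_tangle_def by auto
  then show ?thesis using tooth_lemma[OF g rP(1) rP(3)] by blast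
qed

lemma orient_eq: "orientations (Upair X Y) = {(X, Y), (Y, X)}"
  unfolding orientations_def by auto

theorem mainTheorem18:
  fixes V :: "'a set" and E :: "'a \<Rightarrow> 'a \<Rightarrow> bool"
    and N :: "'a set uprod set" and s :: "nat \<Rightarrow> 'a set \<times> 'a set"
  assumes "graph V E" and "connected_graph V E" and "locally_finite V E"
    and "\<forall>t\<in>N. separation V E t" and "nested_set N"
    and "\<forall>i j. i < j \<longrightarrow> sep_le (s i) (s j) \<and> s i \<noteq> s j"
    and "\<forall>i. Upair (fst (s i)) (snd (s i)) \<in> N"
    and "\<forall>i. tight_sep V E (Upair (fst (s i)) (snd (s i)))"
    and "A = (\<Union>i. fst (s i))" and "B = (\<Inter>i. snd (s i))"
    and "B \<noteq> {}"
    and "distinguishes_set V E N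
           {end_pre_tangle V E \<omega> | \<omega>. is_end V E \<omega> \<and> end_in_closure V E \<omega> (A \<inter> B)}"
  shows "\<exists>!\<omega>. is_end V E \<omega> \<and> end_in_closure V E \<omega> (A \<inter> B)"
proof -
  note g = assms(1)
  define a where "a i = fst (s i)" for i
  define b where "b i = snd (s i)" for i
  have sab: "s i = (a i, b i)" for i unfolding a_def b_def by simp
  have tu: "is_sep V E (a i) (b i) \<and> (\<exists>K. tight_component V E (a i \<inter> b i) K \<and> K \<subseteq> b i - a i)
     \<and> (\<exists>K. tight_component V E (a i \<inter> b i) K \<and> K \<subseteq> a i - b i)" for i
    using tight_unpack[OF g] assms(8) unfolding a_def b_def by blast
  have mono: "a i \<subseteq> a j \<and> b j \<subseteq> b i" if "i \<le> j" for i j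
  proof (cases "i = j")
    case False
    then have "i < j" using that by simp
    then have "sep_le (s i) (s j)" using assms(6) by blast
    then show ?thesis unfolding sep_le_def a_def b_def by blast
  qed simp
  have inj: "(a i, b i) \<noteq> (a j, b j)" if "i \<noteq> j" for i j
  proof -
    have "i < j \<or> j < i" using that by arith
    then have "s i \<noteq> s j" using assms(6) by metis
    then show ?thesis using sab by metis
  qed
  have A: "A = (\<Union>i. a i)" and B: "B = (\<Inter>i. b i)" using assms(9,10) unfolding a_def b_def by auto
  have Finf: "infinite (A \<inter> B)"
    by (rule AB_infinite[OF g assms(2) assms(3) mono inj]) (use tu A B assms(11) in auto)
  have FV: "A \<inter> B \<subseteq> V" using tu A unfolding is_sep_def by blast
  have ex: "\<exists>\<omega>. is_end V E \<omega> \<and> end_in_closure V E \<omega> (A \<inter> B)"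
    using exists_end_closure[OF g assms(3) assms(2) FV Finf] .
  show ?thesis
  proof (rule ex_ex1I[OF ex])
    fix \<omega>1 \<omega>2
    assume w1: "is_end V E \<omega>1 \<and> end_in_closure V E \<omega>1 (A \<inter> B)"
      and w2: "is_end V E \<omega>2 \<and> end_in_closure V E \<omega>2 (A \<inter> B)"
    show "\<omega>1 = \<omega>2"
    proof (rule ccontr)
      assume ne: "\<omega>1 \<noteq> \<omega>2"
      obtain C D where CD: "is_sep V E C D" "(C, D) \<in> end_pre_tangle V E \<omega>1" "(D, C) \<in> end_pre_tangle V E \<omega>2"
        using distinct_ends_sep[OF g _ _ ne] w1 w2 by blast
      let ?p1 = "end_pre_tangle V E \<omega>1" and ?p2 = "end_pre_tangle V E \<omega>2"
      have m1: "?p1 \<in> {end_pre_tangle V E \<omega> | \<omega>. is_end V E \<omega> \<and> end_in_closure V E \<omega> (A \<inter> B)}" using w1 by blast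
      have m2: "?p2 \<in> {end_pre_tangle V E \<omega> | \<omega>. is_end V E \<omega> \<and> end_in_closure V E \<omega> (A \<inter> B)}" using w2 by blast
      have sepCD: "separation V E (Upair C D)" unfolding separation_def using CD(1) by blast
      have nCD: "(C, D) \<notin> ?p2" using pt_one[of V E \<omega>2 D C] w2 CD(3) by blast
      have "distinguishes (Upair C D) ?p1 ?p2" unfolding distinguishes_def orient_eq
        using CD(2,3) nCD by blast
      then obtain t where t: "t \<in> N" "distinguishes t ?p1 ?p2"
        using assms(12) m1 m2 sepCD unfolding distinguishes_set_def by blast
      obtain X Y where tXY: "t = Upair X Y" using assms(4) t(1) unfolding separation_def by blast
      have d: "?p1 \<inter> {(X, Y), (Y, X)} \<noteq> {}" "?p2 \<inter> {(X, Y), (Y, X)} \<noteq> {}"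
        "?p1 \<inter> {(X, Y), (Y, X)} \<noteq> ?p2 \<inter> {(X, Y), (Y, X)}"
        using t(2) unfolding tXY distinguishes_def orient_eq by auto
      have o1: "(X, Y) \<in> ?p1 \<Longrightarrow> (Y, X) \<notin> ?p1" "(Y, X) \<in> ?p1 \<Longrightarrow> (X, Y) \<notin> ?p1"
        using pt_one[of V E \<omega>1] w1 by blast+
      have o2: "(X, Y) \<in> ?p2 \<Longrightarrow> (Y, X) \<notin> ?p2" "(Y, X) \<in> ?p2 \<Longrightarrow> (X, Y) \<notin> ?p2"
        using pt_one[of V E \<omega>2] w2 by blast+
      have "\<exists>X' Y'. t = Upair X' Y' \<and> (X', Y') \<in> ?p1 \<and> (Y', X') \<in> ?p2"
      proof (cases "(X, Y) \<in> ?p1")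
        case True
        then have "(Y, X) \<notin> ?p1" using o1 by blast
        show ?thesis
        proof (cases "(Y, X) \<in> ?p2")
          case True then show ?thesis using \<open>(X, Y) \<in> ?p1\<close> tXY by blast
        next
          case False
          then have "(X, Y) \<in> ?p2" using d(2) by blast
          then have "?p1 \<inter> {(X, Y), (Y, X)} = ?p2 \<inter> {(X, Y), (Y, X)}"
            using False \<open>(Y, X) \<notin> ?p1\<close> \<open>(X, Y) \<in> ?p1\<close> by blast
          then show ?thesis using d(3) by blast
        qed
      next
        case False
        then have yx1: "(Y, X) \<in> ?p1" using d(1) by blast
        show ?thesis
        proof (cases "(X, Y) \<in> ?p2")
          case True then show ?thesis using yx1 tXY by (metis Upair_inject)
        next
          case nxy2: False
          then have "(Y, X) \<in> ?p2" using d(2) by blast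
          then have "?p1 \<inter> {(X, Y), (Y, X)} = ?p2 \<inter> {(X, Y), (Y, X)}"
            using nxy2 False yx1 by blast
          then show ?thesis using d(3) by blast
        qed
      qed
      then obtain X' Y' where XY': "t = Upair X' Y'" "(X', Y') \<in> ?p1" "(Y', X') \<in> ?p2" by blast
      obtain f1 where f1: "f1 \<in> A \<inter> B" "f1 \<in> Y' - X'" using closure_tooth[OF g _ XY'(2)] w1 by blast
      obtain f2 where f2: "f2 \<in> A \<inter> B" "f2 \<in> X' - Y'" using closure_tooth[OF g _ XY'(3)] w2 by blast
      obtain m1 where m1': "f1 \<in> a m1" using f1 A by blast
      obtain m2 where m2': "f2 \<in> a m2" using f2 A by blast
      define m where "m = max m1 m2"
      have fa: "f1 \<in> a m" "f2 \<in> a m" using m1' m2' mono[of m1 m] mono[of m2 m] unfolding m_def by auto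
      have fb: "f1 \<in> b m" "f2 \<in> b m" using f1 f2 B by auto
      have "Upair (a m) (b m) \<in> N" using assms(7) unfolding a_def b_def by blast
      then have "nested t (Upair (a m) (b m))" using assms(5) t(1) unfolding nested_set_def by blast
      then obtain p q where pq: "p \<in> {(X', Y'), (Y', X')}" "q \<in> {(a m, b m), (b m, a m)}" "sep_le p q"
        unfolding nested_def XY'(1) orient_eq by blast
      show False using pq fa fb f1 f2 unfolding sep_le_def by auto
    qed
  qed
qed


end
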